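(* Let $n\geq 3$ and $q=p^h$. If $c$ is a codeword of minimum weight of $C(PG(n,q))^\perp$, then $supp(c)$ is contained in a plane of $PG(n,q)$.
   Context: $C(PG(n,q))$ is the $\mathbb{F}_p$-span of the incidence vectors of the hyperplanes of $PG(n,q)$, with coordinates indexed by points. $C^\perp$ is its dual with respect to the standard scalar product over $\mathbb{F}_p$. $supp(c)$ is the set of points at which $c$ is nonzero. *)

theory Defs
  imports Main
begin

text \<open>Projective space PG(n,q) over a finite field 'a with q = CARD('a) = p^h elements.
  Vectors of F_q^(n+1) are functions nat => 'a vanishing outside {0..n};
  a point is the set of nonzero scalar multiples of a nonzero vector.
  The prime field F_p is realised as the prime subfield of 'a.\<close>

definition pg_vecs :: "nat \<Rightarrow> (nat \<Rightarrow> 'a::field) set" where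
  "pg_vecs n = {v. \<forall>i>n. v i = 0}"

definition pg_point :: "(nat \<Rightarrow> 'a::field) \<Rightarrow> (nat \<Rightarrow> 'a) set" where
  "pg_point v = {(\<lambda>i. a * v i) | a. a \<noteq> 0}"

definition pg_points :: "nat \<Rightarrow> (nat \<Rightarrow> 'a::field) set set" where
  "pg_points n = {pg_point v | v. v \<in> pg_vecs n \<and> v \<noteq> (\<lambda>i. 0)}"

definition pg_dot :: "nat \<Rightarrow> (nat \<Rightarrow> 'a::field) \<Rightarrow> (nat \<Rightarrow> 'a) \<Rightarrow> 'a" where
  "pg_dot n u v = (\<Sum>i\<le>n. u i * v i)"

definition pg_hyperplanes :: "nat \<Rightarrow> (nat \<Rightarrow> 'a::field) set set set" where
  "pg_hyperplanes n =
     {{P \<in> pg_points n. \<forall>v\<in>P. pg_dot n u v = 0} | u. u \<in> pg_vecs n \<and> u \<noteq> (\<lambda>i. 0)}"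

definition pg_planes :: "nat \<Rightarrow> (nat \<Rightarrow> 'a::field) set set set" where
  "pg_planes n =
     {{P \<in> pg_points n. \<exists>a b d. (\<lambda>i. a * u1 i + b * u2 i + d * u3 i) \<in> P}
       | u1 u2 u3. u1 \<in> pg_vecs n \<and> u2 \<in> pg_vecs n \<and> u3 \<in> pg_vecs n \<and>
          (\<forall>a b d. (\<lambda>i. a * u1 i + b * u2 i + d * u3 i) = (\<lambda>i. 0) \<longrightarrow>
                     a = 0 \<and> b = 0 \<and> d = 0)}"

definition prime_field :: "'a::field set" where
  "prime_field = range of_nat"

definition incidence :: "'p set \<Rightarrow> 'p \<Rightarrow> 'a::field" where
  "incidence H P = (if P \<in> H then 1 else 0)"

text \<open>C(PG(n,q)): the F_p-span of the incidence vectors of hyperplanes.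
  Words are functions on points (taking value 0 off the point set).\<close>
definition pg_code :: "nat \<Rightarrow> ((nat \<Rightarrow> 'a::field) set \<Rightarrow> 'a) set" where
  "pg_code n = {(\<lambda>P. \<Sum>H\<in>pg_hyperplanes n. l H * incidence H P) | l.
                  \<forall>H. l H \<in> prime_field}"

definition pg_dual_code :: "nat \<Rightarrow> ((nat \<Rightarrow> 'a::field) set \<Rightarrow> 'a) set" where
  "pg_dual_code n = {c. (\<forall>P. c P \<in> prime_field) \<and> (\<forall>P. P \<notin> pg_points n \<longrightarrow> c P = 0) \<and>
       (\<forall>w\<in>pg_code n. (\<Sum>P\<in>pg_points n. c P * w P) = 0)}"

definition pg_supp :: "nat \<Rightarrow> ((nat \<Rightarrow> 'a::field) set \<Rightarrow> 'a) \<Rightarrow> (nat \<Rightarrow> 'a) set set" where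
  "pg_supp n c = {P \<in> pg_points n. c P \<noteq> 0}"

definition pg_weight :: "nat \<Rightarrow> ((nat \<Rightarrow> 'a::field) set \<Rightarrow> 'a) \<Rightarrow> nat" where
  "pg_weight n c = card (pg_supp n c)"

definition min_weight_codeword ::
  "((nat \<Rightarrow> 'a::field) set \<Rightarrow> 'a) set \<Rightarrow> nat \<Rightarrow> ((nat \<Rightarrow> 'a) set \<Rightarrow> 'a) \<Rightarrow> bool" where
  "min_weight_codeword C n c \<longleftrightarrow> c \<in> C \<and> pg_supp n c \<noteq> {} \<and>
     (\<forall>c'\<in>C. pg_supp n c' \<noteq> {} \<longrightarrow> pg_weight n c \<le> pg_weight n c')"

end

theory Submission
  imports Defs "HOL-Library.Function_Algebras" "HOL-Number_Theory.Residues"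
begin

interpretation fv: vector_space "(\<lambda>a (v::nat\<Rightarrow>'a::field) i. a * v i)"
  by unfold_locales (auto simp: fun_eq_iff algebra_simps)

lemma card0: "of_nat (card (UNIV::'a::{finite,field} set)) = (0::'a)"
  using CHAR_dvd_CARD[where 'a='a] of_nat_eq_0_iff_char_dvd by blast

lemma card_ge2: "card (UNIV::'a::{finite,field} set) \<ge> 2"
proof -
  have "{0::'a, 1} \<subseteq> UNIV" by auto
  hence "card {0::'a,1} \<le> card (UNIV::'a set)" by (rule card_mono[OF finite_UNIV])
  thus ?thesis by simp
qed

lemma qm1: "(of_nat (card (UNIV::'a::{finite,field} set) - 1) :: 'a) = -1"
proof -
  have "card (UNIV::'a set) \<ge> 1" using card_ge2[where 'a='a] by simp
  hence "(of_nat (card (UNIV::'a set) - 1)::'a) = of_nat (card (UNIV::'a set)) - 1"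
    by (simp add: of_nat_diff)
  thus ?thesis using card0[where 'a='a] by simp
qed

lemma sum_apply_fun: "(sum f A) i = sum (\<lambda>x. f x i) A"
  by (induction A rule: infinite_finite_induct) auto

definition smul :: "'a \<Rightarrow> (nat \<Rightarrow> 'a) \<Rightarrow> nat \<Rightarrow> 'a::field" where
  "smul a v = (\<lambda>i. a * v i)"

lemma smul_apply[simp]: "smul a v i = a * v i" by (simp add: smul_def)

lemma finite_vecs: "finite (pg_vecs n :: (nat \<Rightarrow> 'a::{finite,field}) set)"
proof -
  have "pg_vecs n \<subseteq> (\<lambda>g i. if i \<le> n then g i else 0) ` (PiE {..n} (\<lambda>_. (UNIV::'a set)))"
  proof
    fix v :: "nat \<Rightarrow> 'a" assume v: "v \<in> pg_vecs n"
    show "v \<in> (\<lambda>g i. if i \<le> n then g i else 0) ` (PiE {..n} (\<lambda>_. UNIV))"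
      apply (rule image_eqI[where x="restrict v {..n}"])
      using v by (auto simp: pg_vecs_def fun_eq_iff)
  qed
  moreover have "finite (PiE {..n} (\<lambda>_. (UNIV::'a set)))" by (rule finite_PiE) auto
  ultimately show ?thesis by (meson finite_imageI finite_subset)
qed

lemma vecs_smul[simp]: "v \<in> pg_vecs n \<Longrightarrow> smul a v \<in> pg_vecs n"
  by (simp add: pg_vecs_def)

lemma pp_def2: "pg_point v = (\<lambda>a. smul a v) ` (UNIV - {0})"
  by (auto simp: pg_point_def smul_def)

lemma pp_mem: "v \<in> pg_point v"
  unfolding pg_point_def by (rule CollectI, rule exI[of _ 1]) auto

lemma pp_memE: "w \<in> pg_point v \<Longrightarrow> \<exists>a. a \<noteq> 0 \<and> w = smul a v"
  by (auto simp: pg_point_def smul_def)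

lemma pp_memI: "a \<noteq> 0 \<Longrightarrow> smul a v \<in> pg_point v"
  by (auto simp: pg_point_def smul_def)

lemma smul_smul[simp]: "smul a (smul b v) = smul (a*b) v"
  by (simp add: smul_def fun_eq_iff)

lemma smul_one[simp]: "smul 1 v = v" by (simp add: smul_def)

lemma smul_zero_iff: "smul a v = (\<lambda>i. 0) \<longleftrightarrow> a = 0 \<or> v = (\<lambda>i. 0)"
  by (auto simp: fun_eq_iff)

lemma pp_scale: "a \<noteq> 0 \<Longrightarrow> pg_point (smul a v) = pg_point v"
proof
  assume a: "a \<noteq> 0"
  show "pg_point (smul a v) \<subseteq> pg_point v"
    using a by (auto simp: pp_def2)
  show "pg_point v \<subseteq> pg_point (smul a v)"
  proof
    fix w assume "w \<in> pg_point v"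
    then obtain b where b: "b \<noteq> 0" "w = smul b v" using pp_memE by blast
    have "smul (b/a) (smul a v) \<in> pg_point (smul a v)" by (rule pp_memI) (use a b in simp)
    moreover have "smul (b/a) (smul a v) = w" using a b by (simp add: smul_def fun_eq_iff)
    ultimately show "w \<in> pg_point (smul a v)" by simp
  qed
qed

lemma pp_eq_iff: "pg_point v = pg_point w \<longleftrightarrow> w \<in> pg_point v"
proof
  assume "pg_point v = pg_point w" thus "w \<in> pg_point v" using pp_mem by metis
next
  assume "w \<in> pg_point v"
  then obtain a where "a \<noteq> 0" "w = smul a v" using pp_memE by blast
  thus "pg_point v = pg_point w" using pp_scale by metis
qed

lemma pp_zero: "pg_point (\<lambda>i. 0) = {(\<lambda>i. 0::'a::field)}"
proof
  show "pg_point (\<lambda>i. 0) \<subseteq> {(\<lambda>i. 0::'a)}" by (auto simp: pg_point_def)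
  show "{(\<lambda>i. 0::'a)} \<subseteq> pg_point (\<lambda>i. 0)" using pp_mem[of "\<lambda>i. 0::'a"] by simp
qed

lemma points_iff: "P \<in> pg_points n \<longleftrightarrow> (\<exists>v. v \<in> pg_vecs n \<and> v \<noteq> (\<lambda>i. 0) \<and> P = pg_point v)"
  by (auto simp: pg_points_def)

lemma zero_not_point: "{(\<lambda>i. 0::'a::field)} \<notin> pg_points n"
proof
  assume "{(\<lambda>i. 0::'a)} \<in> pg_points n"
  then have "\<exists>v. v \<in> pg_vecs n \<and> v \<noteq> (\<lambda>i. 0) \<and> {(\<lambda>i. 0::'a)} = pg_point v" by (simp only: points_iff)
  then have v: "(SOME v. v \<in> pg_vecs n \<and> v \<noteq> (\<lambda>i. 0) \<and> {(\<lambda>i. 0::'a)} = pg_point v) \<in> pg_vecs n \<and> (SOME v. v \<in> pg_vecs n \<and> v \<noteq> (\<lambda>i. 0) \<and> {(\<lambda>i. 0::'a)} = pg_point v) \<noteq> (\<lambda>i. 0) \<and> {(\<lambda>i. 0)} = pg_point (SOME v. v \<in> pg_vecs n \<and> v \<noteq> (\<lambda>i. 0) \<and> {(\<lambda>i. 0::'a)} = pg_point v)"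
    by (rule someI_ex)
  define v where "v = (SOME v. v \<in> pg_vecs n \<and> v \<noteq> (\<lambda>i. 0) \<and> {(\<lambda>i. 0::'a)} = pg_point v)"
  note v = v[folded v_def]
  have "v \<in> {(\<lambda>i. 0)}" by (subst conjunct2[OF conjunct2[OF v]]) (rule pp_mem)
  hence "v = (\<lambda>i. 0)" by (rule singletonD)
  thus False using conjunct1[OF conjunct2[OF v]] by contradiction
qed

lemma pp_in_points: "v \<in> pg_vecs n \<Longrightarrow> v \<noteq> (\<lambda>i. 0) \<Longrightarrow> pg_point v \<in> pg_points n"
  by (auto simp: points_iff)

lemma point_mem_rep: "P \<in> pg_points n \<Longrightarrow> v \<in> P \<Longrightarrow> P = pg_point v \<and> v \<in> pg_vecs n \<and> v \<noteq> (\<lambda>i. 0)"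
proof -
  assume P: "P \<in> pg_points n" and vP: "v \<in> P"
  then obtain w where w: "w \<in> pg_vecs n" "w \<noteq> (\<lambda>i. 0)" "P = pg_point w" by (auto simp: points_iff)
  then obtain a where a: "a \<noteq> 0" "v = smul a w" using vP pp_memE by blast
  show ?thesis using w a pp_scale[of a w] by (auto simp: smul_zero_iff)
qed

lemma card_point: "v \<noteq> (\<lambda>i. 0) \<Longrightarrow> card (pg_point v :: (nat \<Rightarrow> 'a::{finite,field}) set) = card (UNIV::'a set) - 1"
proof -
  assume v: "v \<noteq> (\<lambda>i. 0)"
  then obtain k where k: "v k \<noteq> 0" by auto
  have "inj_on (\<lambda>a. smul a v) (UNIV - {0})"
    by (rule inj_onI) (metis k mult_right_cancel smul_apply)
  hence "card (pg_point v) = card (UNIV - {0::'a})" by (simp add: pp_def2 card_image)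
  thus ?thesis by (simp add: card_Diff_singleton)
qed

lemma card_point2: "P \<in> pg_points n \<Longrightarrow> card (P :: (nat \<Rightarrow> 'a::{finite,field}) set) = card (UNIV::'a set) - 1"
  by (auto simp: points_iff card_point)

lemma finite_points: "finite (pg_points n :: (nat \<Rightarrow> 'a::{finite,field}) set set)"
proof -
  have "pg_points n \<subseteq> pg_point ` (pg_vecs n :: (nat \<Rightarrow> 'a) set)" by (auto simp: points_iff)
  thus ?thesis using finite_vecs by (meson finite_imageI finite_subset)
qed

lemma dot_smul: "pg_dot n u (smul a v) = a * pg_dot n u v"
  by (simp add: pg_dot_def sum_distrib_left algebra_simps)

definition Hyp :: "nat \<Rightarrow> (nat \<Rightarrow> 'a::field) \<Rightarrow> (nat \<Rightarrow> 'a) set set" where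
  "Hyp n u = {P \<in> pg_points n. \<forall>v\<in>P. pg_dot n u v = 0}"

lemma pp_in_Hyp: "pg_point v \<in> Hyp n u \<longleftrightarrow> v \<in> pg_vecs n \<and> v \<noteq> (\<lambda>i. 0) \<and> pg_dot n u v = 0"
proof
  assume h: "pg_point v \<in> Hyp n u"
  hence "pg_point v \<in> pg_points n" by (simp add: Hyp_def)
  thus "v \<in> pg_vecs n \<and> v \<noteq> (\<lambda>i. 0) \<and> pg_dot n u v = 0"
    using point_mem_rep[OF _ pp_mem] h pp_mem by (auto simp: Hyp_def)
next
  assume h: "v \<in> pg_vecs n \<and> v \<noteq> (\<lambda>i. 0) \<and> pg_dot n u v = 0"
  thus "pg_point v \<in> Hyp n u"
    by (auto simp: Hyp_def pp_in_points dot_smul dest!: pp_memE)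
qed

lemma Hyp_sub: "Hyp n u \<subseteq> pg_points n" by (auto simp: Hyp_def)

lemma pf_0: "0 \<in> prime_field" by (metis of_nat_0 prime_field_def rangeI)
lemma pf_1: "1 \<in> prime_field" by (metis of_nat_1 prime_field_def rangeI)
lemma pf_add: "x \<in> prime_field \<Longrightarrow> y \<in> prime_field \<Longrightarrow> x + y \<in> prime_field"
  by (auto simp: prime_field_def) (metis of_nat_add rangeI)
lemma pf_mult: "x \<in> prime_field \<Longrightarrow> y \<in> prime_field \<Longrightarrow> x * y \<in> prime_field"
  by (auto simp: prime_field_def) (metis of_nat_mult rangeI)
lemma pf_sum: "(\<And>x. x \<in> A \<Longrightarrow> f x \<in> prime_field) \<Longrightarrow> sum f A \<in> prime_field"
  by (induction A rule: infinite_finite_induct) (auto intro: pf_0 pf_add)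
lemma pf_m1: "(-1::'a::{finite,field}) \<in> prime_field"
  unfolding prime_field_def using qm1[where 'a='a] by (metis rangeI)

lemma finite_hyps: "finite (pg_hyperplanes n :: (nat \<Rightarrow> 'a::{finite,field}) set set set)"
proof -
  have "pg_hyperplanes n \<subseteq> (\<lambda>u. {P \<in> pg_points n. \<forall>v\<in>P. pg_dot n u v = (0::'a)}) ` pg_vecs n"
    by (auto simp: pg_hyperplanes_def)
  thus ?thesis using finite_vecs by (meson finite_imageI finite_subset)
qed

lemma Hyp_in_hyps: "u \<in> pg_vecs n \<Longrightarrow> u \<noteq> (\<lambda>i. 0) \<Longrightarrow> Hyp n u \<in> pg_hyperplanes n"
  unfolding pg_hyperplanes_def Hyp_def by blast

lemma hyps_Hyp: "H \<in> pg_hyperplanes n \<Longrightarrow> \<exists>u. u \<in> pg_vecs n \<and> u \<noteq> (\<lambda>i. 0) \<and> H = Hyp n u"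
  unfolding pg_hyperplanes_def Hyp_def by blast

lemma dual_hyp:
  fixes c :: "(nat \<Rightarrow> 'a::{finite,field}) set \<Rightarrow> 'a"
  assumes c: "c \<in> pg_dual_code n" and u: "u \<in> pg_vecs n" "u \<noteq> (\<lambda>i. 0)"
  shows "(\<Sum>P\<in>Hyp n u. c P) = 0"
proof -
  define l :: "(nat \<Rightarrow> 'a) set set \<Rightarrow> 'a" where "l = (\<lambda>H. if H = Hyp n u then 1 else 0)"
  define w where "w = (\<lambda>P. \<Sum>H\<in>pg_hyperplanes n. l H * incidence H P)"
  have "\<forall>H. l H \<in> prime_field" by (auto simp: l_def pf_0 pf_1)
  hence "w \<in> pg_code n" unfolding pg_code_def w_def by blast
  hence 0: "(\<Sum>P\<in>pg_points n. c P * w P) = 0" using c by (auto simp: pg_dual_code_def)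
  have w: "w P = incidence (Hyp n u) P" for P
  proof -
    have "w P = (\<Sum>H\<in>pg_hyperplanes n. if Hyp n u = H then incidence H P else 0)"
      unfolding w_def l_def by (rule sum.cong) auto
    also have "\<dots> = incidence (Hyp n u) P" by (subst sum.delta'[OF finite_hyps]) (simp add: Hyp_in_hyps[OF u])
    finally show ?thesis .
  qed
  have "(\<Sum>P\<in>pg_points n. c P * w P) = (\<Sum>P\<in>pg_points n. if P \<in> Hyp n u then c P else 0)"
    by (rule sum.cong) (auto simp: w incidence_def)
  also have "\<dots> = (\<Sum>P\<in>{P \<in> pg_points n. P \<in> Hyp n u}. c P)"
    by (simp add: sum.inter_filter[OF finite_points])
  also have "{P \<in> pg_points n. P \<in> Hyp n u} = Hyp n u" using Hyp_sub by blast
  finally show ?thesis using 0 by simp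
qed

lemma dual_intro:
  fixes c :: "(nat \<Rightarrow> 'a::{finite,field}) set \<Rightarrow> 'a"
  assumes pf: "\<And>P. c P \<in> prime_field" and off: "\<And>P. P \<notin> pg_points n \<Longrightarrow> c P = 0"
    and hyp: "\<And>u. u \<in> pg_vecs n \<Longrightarrow> u \<noteq> (\<lambda>i. 0) \<Longrightarrow> (\<Sum>P\<in>Hyp n u. c P) = 0"
  shows "c \<in> pg_dual_code n"
proof -
  have "(\<Sum>P\<in>pg_points n. c P * w P) = 0" if w: "w \<in> pg_code n" for w :: "(nat \<Rightarrow> 'a) set \<Rightarrow> 'a"
  proof -
    obtain l :: "(nat \<Rightarrow> 'a) set set \<Rightarrow> 'a" where wl: "w = (\<lambda>P. \<Sum>H\<in>pg_hyperplanes n. l H * incidence H P)"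
      using w unfolding pg_code_def by blast
    have "(\<Sum>P\<in>pg_points n. c P * w P) = (\<Sum>P\<in>pg_points n. \<Sum>H\<in>pg_hyperplanes n. l H * (c P * incidence H P))"
      unfolding wl by (simp add: sum_distrib_left algebra_simps)
    also have "\<dots> = (\<Sum>H\<in>pg_hyperplanes n. l H * (\<Sum>P\<in>pg_points n. c P * incidence H P))"
      by (subst sum.swap) (simp add: sum_distrib_left)
    also have "\<dots> = 0"
    proof (rule sum.neutral, rule ballI)
      fix H :: "(nat \<Rightarrow> 'a) set set" assume H: "H \<in> pg_hyperplanes n"
      then obtain u where u: "u \<in> pg_vecs n" "u \<noteq> (\<lambda>i. 0)" "H = Hyp n u" using hyps_Hyp by blast
      have "(\<Sum>P\<in>pg_points n. c P * incidence H P) = (\<Sum>P\<in>pg_points n. if P \<in> H then c P else 0)"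
        by (rule sum.cong) (auto simp: incidence_def)
      also have "\<dots> = (\<Sum>P\<in>{P \<in> pg_points n. P \<in> H}. c P)"
        by (simp add: sum.inter_filter[OF finite_points])
      also have "{P \<in> pg_points n. P \<in> H} = Hyp n u" using Hyp_sub u(3) by blast
      finally show "l H * (\<Sum>P\<in>pg_points n. c P * incidence H P) = 0" using hyp[OF u(1,2)] by simp
    qed
    finally show ?thesis .
  qed
  thus ?thesis unfolding pg_dual_code_def using pf off by blast
qed

lemma fib_set:
  assumes "P \<in> Hyp n u"
  shows "{v \<in> {v \<in> pg_vecs n. v \<noteq> (\<lambda>i. 0) \<and> pg_dot n u v = 0}. pg_point v = P} = P"
proof (intro equalityI subsetI)
  fix v assume "v \<in> {v \<in> {v \<in> pg_vecs n. v \<noteq> (\<lambda>i. 0) \<and> pg_dot n u v = 0}. pg_point v = P}"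
  hence "pg_point v = P" by simp
  thus "v \<in> P" using pp_mem[of v] by simp
next
  fix v assume v: "v \<in> P"
  have P: "P \<in> pg_points n" using assms Hyp_sub by blast
  have r: "P = pg_point v \<and> v \<in> pg_vecs n \<and> v \<noteq> (\<lambda>i. 0)" by (rule point_mem_rep[OF P v])
  hence "pg_point v \<in> Hyp n u" using assms by simp
  hence "pg_dot n u v = 0" by (simp add: pp_in_Hyp)
  thus "v \<in> {v \<in> {v \<in> pg_vecs n. v \<noteq> (\<lambda>i. 0) \<and> pg_dot n u v = 0}. pg_point v = P}"
    using r by simp
qed

lemma FIB:
  fixes g :: "(nat \<Rightarrow> 'a::{finite,field}) set \<Rightarrow> 'b::comm_ring_1"
  shows "(\<Sum>v\<in>{v \<in> pg_vecs n. v \<noteq> (\<lambda>i. 0) \<and> pg_dot n u v = 0}. g (pg_point v))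
         = of_nat (card (UNIV::'a set) - 1) * (\<Sum>P\<in>Hyp n u. g P)"
proof -
  let ?S = "{v \<in> pg_vecs n. v \<noteq> (\<lambda>i. 0) \<and> pg_dot n u v = (0::'a)}"
  have fS: "finite ?S" by (rule finite_subset[OF _ finite_vecs]) auto
  have fT: "finite (Hyp n u)" using finite_points Hyp_sub by (rule finite_subset[rotated])
  have im: "pg_point ` ?S \<subseteq> Hyp n u" by (auto simp: pp_in_Hyp)
  have "(\<Sum>v\<in>?S. g (pg_point v)) = (\<Sum>P\<in>Hyp n u. \<Sum>v\<in>{v \<in> ?S. pg_point v = P}. g (pg_point v))"
    by (rule sum.group[OF fS fT im, symmetric])
  also have "\<dots> = (\<Sum>P\<in>Hyp n u. of_nat (card (UNIV::'a set) - 1) * g P)"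
  proof (rule sum.cong[OF refl])
    fix P assume P: "P \<in> Hyp n u"
    have "(\<Sum>v\<in>{v \<in> ?S. pg_point v = P}. g (pg_point v)) = (\<Sum>v\<in>{v \<in> ?S. pg_point v = P}. g P)"
      by (rule sum.cong) auto
    also have "\<dots> = (\<Sum>v\<in>P. g P)" by (simp only: fib_set[OF P])
    also have "\<dots> = of_nat (card P) * g P" by simp
    also have "card P = card (UNIV::'a set) - 1" using P Hyp_sub card_point2 by blast
    finally show "(\<Sum>v\<in>{v \<in> ?S. pg_point v = P}. g (pg_point v)) = of_nat (card (UNIV::'a set) - 1) * g P" .
  qed
  also have "\<dots> = of_nat (card (UNIV::'a set) - 1) * (\<Sum>P\<in>Hyp n u. g P)" by (simp add: sum_distrib_left)
  finally show ?thesis .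
qed

lemma drop0: "finite A \<Longrightarrow> f (\<lambda>i. 0) = 0 \<Longrightarrow> sum f A = sum f {v\<in>A. v \<noteq> (\<lambda>i. 0)}"
  by (rule sum.mono_neutral_right) auto

lemma dual_zero: "c \<in> pg_dual_code n \<Longrightarrow> c (pg_point (\<lambda>i. 0::'a::field)) = 0"
  by (simp add: pg_dual_code_def pp_zero zero_not_point)

lemma vec_hyp:
  fixes c :: "(nat \<Rightarrow> 'a::{finite,field}) set \<Rightarrow> 'a"
  assumes c: "c \<in> pg_dual_code n" and u: "u \<in> pg_vecs n" "u \<noteq> (\<lambda>i. 0)"
  shows "(\<Sum>v\<in>{v \<in> pg_vecs n. pg_dot n u v = 0}. c (pg_point v)) = 0"
proof -
  have "(\<Sum>v\<in>{v \<in> pg_vecs n. pg_dot n u v = 0}. c (pg_point v))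
      = (\<Sum>v\<in>{v \<in> {v \<in> pg_vecs n. pg_dot n u v = 0}. v \<noteq> (\<lambda>i. 0)}. c (pg_point v))"
    by (rule drop0) (auto intro: finite_subset[OF _ finite_vecs] simp: dual_zero[OF c])
  also have "{v \<in> {v \<in> pg_vecs n. pg_dot n u v = 0}. v \<noteq> (\<lambda>i. 0)} = {v \<in> pg_vecs n. v \<noteq> (\<lambda>i. 0) \<and> pg_dot n u v = 0}"
    by blast
  also have "(\<Sum>v\<in>\<dots>. c (pg_point v)) = 0" by (simp add: FIB dual_hyp[OF c u])
  finally show ?thesis .
qed

lemma dot_two:
  assumes "j \<noteq> k" "j \<le> n" "k \<le> n"
  shows "pg_dot n (\<lambda>i. if i = j then a else if i = k then b else 0) v = a * v j + b * v k"
proof -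
  have "pg_dot n (\<lambda>i. if i = j then a else if i = k then b else 0) v
       = (\<Sum>i\<le>n. (if i = j then a * v j else 0) + (if i = k then b * v k else 0))"
    unfolding pg_dot_def by (rule sum.cong) (use assms(1) in auto)
  also have "\<dots> = a * v j + b * v k" using assms by (simp add: sum.distrib)
  finally show ?thesis .
qed

lemma dot_one:
  assumes "k \<le> n"
  shows "pg_dot n (\<lambda>i. if i = k then 1 else 0) v = v k"
proof -
  have "pg_dot n (\<lambda>i. if i = k then 1 else 0) v = (\<Sum>i\<le>n. if i = k then v k else 0)"
    unfolding pg_dot_def by (rule sum.cong) auto
  also have "\<dots> = v k" using assms by simp
  finally show ?thesis .
qed

lemma sum_if_const: "(\<Sum>t\<in>(UNIV::'a::finite set). if P t then x else 0) = of_nat (card {t. P t}) * (x::'b::comm_ring_1)"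
  by (simp add: sum.If_cases)

lemma coef_one:
  fixes v :: "nat \<Rightarrow> 'a::{finite,field}"
  shows "of_nat (card {t::'a. v 0 + t * v 1 = 0}) + (if v 1 = 0 then 1 else 0) = (1::'a)"
proof (cases "v 1 = 0")
  case False
  have "v 0 + t * v 1 = 0 \<longleftrightarrow> t = - v 0 / v 1" for t
    using False by (auto simp: add_eq_0_iff field_simps)
  hence "{t::'a. v 0 + t * v 1 = 0} = {- v 0 / v 1}" by auto
  thus ?thesis using False by simp
next
  case True
  show ?thesis
  proof (cases "v 0 = 0")
    case True
    hence "{t::'a. v 0 + t * v 1 = 0} = UNIV" using \<open>v 1 = 0\<close> by auto
    thus ?thesis using \<open>v 1 = 0\<close> card0[where 'a='a] by simp
  next
    case False
    hence "{t::'a. v 0 + t * v 1 = 0} = {}" using \<open>v 1 = 0\<close> by auto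
    thus ?thesis using \<open>v 1 = 0\<close> by simp
  qed
qed

lemma total:
  fixes f :: "(nat \<Rightarrow> 'a::{finite,field}) \<Rightarrow> 'a"
  assumes n: "n \<ge> 1"
    and VH: "\<And>u. u \<in> pg_vecs n \<Longrightarrow> u \<noteq> (\<lambda>i. 0) \<Longrightarrow> (\<Sum>v\<in>{v \<in> pg_vecs n. pg_dot n u v = 0}. f v) = 0"
  shows "(\<Sum>v\<in>pg_vecs n. f v) = 0"
proof -
  have fin: "finite (pg_vecs n :: (nat \<Rightarrow> 'a) set)" by (rule finite_vecs)
  have h1: "(\<Sum>v\<in>{v \<in> pg_vecs n. v 0 + t * v 1 = 0}. f v) = 0" for t
  proof -
    let ?u = "(\<lambda>i. if i = 0 then 1 else if i = 1 then t else 0) :: nat \<Rightarrow> 'a"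
    have u: "?u \<in> pg_vecs n" using n by (auto simp: pg_vecs_def)
    have u0: "?u \<noteq> (\<lambda>i. 0)" by (metis one_neq_zero)
    have d: "pg_dot n ?u v = v 0 + t * v 1" for v using dot_two[of 0 1 n 1 t v] n by simp
    show ?thesis using VH[OF u u0] by (simp add: d)
  qed
  have h2: "(\<Sum>v\<in>{v \<in> pg_vecs n. v 1 = 0}. f v) = 0"
  proof -
    let ?u = "(\<lambda>i. if i = 1 then 1 else 0) :: nat \<Rightarrow> 'a"
    have u: "?u \<in> pg_vecs n" using n by (auto simp: pg_vecs_def)
    have u0: "?u \<noteq> (\<lambda>i. 0)" by (metis one_neq_zero)
    have d: "pg_dot n ?u v = v 1" for v using dot_one[of 1 n v] n by simp
    have e: "{v \<in> pg_vecs n. pg_dot n ?u v = 0} = {v \<in> pg_vecs n. v 1 = 0}" by (simp only: d)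
    show ?thesis using VH[OF u u0] by (simp only: e)
  qed
  have "(\<Sum>v\<in>pg_vecs n. f v) = (\<Sum>v\<in>pg_vecs n. of_nat (card {t::'a. v 0 + t * v 1 = 0}) * f v + (if v 1 = 0 then f v else 0))"
  proof (rule sum.cong[OF refl])
    fix v :: "nat \<Rightarrow> 'a"
    have "f v = (of_nat (card {t::'a. v 0 + t * v 1 = 0}) + (if v 1 = 0 then 1 else 0)) * f v"
      by (subst coef_one) simp
    moreover have "(of_nat (card {t::'a. v 0 + t * v 1 = 0}) + (if v 1 = 0 then 1 else 0)) * f v
       = of_nat (card {t::'a. v 0 + t * v 1 = 0}) * f v + (if v 1 = 0 then f v else 0)"
      by (cases "v 1 = 0") (simp_all add: distrib_right)
    ultimately show "f v = of_nat (card {t::'a. v 0 + t * v 1 = 0}) * f v + (if v 1 = 0 then f v else 0)"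
      by (rule trans)
  qed
  also have "\<dots> = (\<Sum>v\<in>pg_vecs n. \<Sum>t\<in>(UNIV::'a set). if v 0 + t * v 1 = 0 then f v else 0)
                 + (\<Sum>v\<in>{v \<in> pg_vecs n. v 1 = 0}. f v)"
    by (simp add: sum.distrib sum_if_const sum.inter_filter[OF fin])
  also have "(\<Sum>v\<in>pg_vecs n. \<Sum>t\<in>(UNIV::'a set). if v 0 + t * v 1 = 0 then f v else 0)
           = (\<Sum>t\<in>(UNIV::'a set). \<Sum>v\<in>{v \<in> pg_vecs n. v 0 + t * v 1 = 0}. f v)"
    by (subst sum.swap) (simp add: sum.inter_filter[OF fin])
  finally show ?thesis by (simp only: h1 h2 sum.neutral_const add_0)
qed

lemma total_dual:
  fixes c :: "(nat \<Rightarrow> 'a::{finite,field}) set \<Rightarrow> 'a"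
  assumes "c \<in> pg_dual_code n" "n \<ge> 1"
  shows "(\<Sum>v\<in>pg_vecs n. c (pg_point v)) = 0"
  by (rule total[OF assms(2)]) (rule vec_hyp[OF assms(1)])

definition proj :: "nat \<Rightarrow> (nat \<Rightarrow> 'a::field) \<Rightarrow> (nat \<Rightarrow> 'a) \<Rightarrow> (nat \<Rightarrow> 'a) \<Rightarrow> nat \<Rightarrow> 'a" where
  "proj n w r v = (\<lambda>i. v i - pg_dot n w v * r i)"

definition push :: "nat \<Rightarrow> (nat \<Rightarrow> 'a::{finite,field}) \<Rightarrow> (nat \<Rightarrow> 'a) \<Rightarrow> ((nat \<Rightarrow> 'a) set \<Rightarrow> 'a) \<Rightarrow> (nat \<Rightarrow> 'a) set \<Rightarrow> 'a" where
  "push n w r c P = (if P \<in> pg_points n then (\<Sum>v\<in>{v \<in> pg_vecs n. proj n w r v \<in> P}. c (pg_point v)) else 0)"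

lemma proj_vecs: "v \<in> pg_vecs n \<Longrightarrow> r \<in> pg_vecs n \<Longrightarrow> proj n w r v \<in> pg_vecs n"
  by (simp add: pg_vecs_def proj_def)

lemma dot_proj: "pg_dot n u (proj n w r v) = pg_dot n (\<lambda>i. u i - pg_dot n u r * w i) v"
proof -
  have "pg_dot n u (proj n w r v) = (\<Sum>i\<le>n. u i * v i - pg_dot n w v * (u i * r i))"
    unfolding proj_def pg_dot_def[of n u "\<lambda>i. v i - pg_dot n w v * r i"] by (rule sum.cong) (simp_all add: algebra_simps)
  also have "\<dots> = pg_dot n u v - pg_dot n w v * pg_dot n u r"
    by (simp add: sum_subtractf sum_distrib_left pg_dot_def[of n u v] pg_dot_def[of n u r])
  finally have 1: "pg_dot n u (proj n w r v) = pg_dot n u v - pg_dot n w v * pg_dot n u r" .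
  have "pg_dot n (\<lambda>i. u i - pg_dot n u r * w i) v = (\<Sum>i\<le>n. u i * v i - pg_dot n u r * (w i * v i))"
    unfolding pg_dot_def[of n "(\<lambda>i. u i - pg_dot n u r * w i)" v] by (rule sum.cong) (simp_all add: algebra_simps)
  also have "\<dots> = pg_dot n u v - pg_dot n u r * pg_dot n w v"
    by (simp add: sum_subtractf sum_distrib_left pg_dot_def[of n u v] pg_dot_def[of n w v])
  finally have 2: "pg_dot n (\<lambda>i. u i - pg_dot n u r * w i) v = pg_dot n u v - pg_dot n u r * pg_dot n w v" .
  show ?thesis using 1 2 by (simp add: mult.commute)
qed

lemma proj_smul: "proj n w r (smul a v) = smul a (proj n w r v)"
  by (simp add: proj_def dot_smul fun_eq_iff algebra_simps)

lemma proj_ker: "pg_dot n w r = 1 \<Longrightarrow> proj n w r v = (\<lambda>i. 0) \<Longrightarrow> v = smul (pg_dot n w v) r"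
  by (simp add: proj_def fun_eq_iff)

lemma proj_eq: "proj n w r v = proj n w r v' \<Longrightarrow> v = (\<lambda>i. v' i + (pg_dot n w v - pg_dot n w v') * r i)"
  by (simp add: proj_def fun_eq_iff algebra_simps)

lemma dot_zero: "pg_dot n (\<lambda>i. 0) v = 0" by (simp add: pg_dot_def)

lemma dual_pf: "c \<in> pg_dual_code n \<Longrightarrow> c P \<in> prime_field" by (simp add: pg_dual_code_def)
lemma dual_off: "c \<in> pg_dual_code n \<Longrightarrow> P \<notin> pg_points n \<Longrightarrow> c P = 0" by (simp add: pg_dual_code_def)

lemma ker_vanish:
  fixes c :: "(nat \<Rightarrow> 'a::{finite,field}) set \<Rightarrow> 'a"
  assumes c: "c \<in> pg_dual_code n" and wr: "pg_dot n w r = 1" and cr: "c (pg_point r) = 0"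
    and pv: "proj n w r v = (\<lambda>i. 0)"
  shows "c (pg_point v) = 0"
proof -
  have v: "v = smul (pg_dot n w v) r" by (rule proj_ker[OF wr pv])
  show ?thesis
  proof (cases "pg_dot n w v = 0")
    case True
    hence "v = (\<lambda>i. 0)" using v by (simp add: smul_def)
    thus ?thesis using dual_zero[OF c] by simp
  next
    case False
    hence "pg_point v = pg_point r" using v pp_scale by metis
    thus ?thesis using cr by simp
  qed
qed

lemma push_dual:
  fixes c :: "(nat \<Rightarrow> 'a::{finite,field}) set \<Rightarrow> 'a"
  assumes c: "c \<in> pg_dual_code n" and n: "n \<ge> 1" and r: "r \<in> pg_vecs n" and w: "w \<in> pg_vecs n"
    and wr: "pg_dot n w r = 1" and cr: "c (pg_point r) = 0"
  shows "push n w r c \<in> pg_dual_code n"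
proof (rule dual_intro)
  fix P show "push n w r c P \<in> prime_field"
    unfolding push_def by (auto intro!: pf_sum dual_pf[OF c] pf_0)
next
  fix P :: "(nat \<Rightarrow> 'a) set" assume "P \<notin> pg_points n" thus "push n w r c P = 0" by (simp add: push_def)
next
  fix u :: "nat \<Rightarrow> 'a" assume u: "u \<in> pg_vecs n" "u \<noteq> (\<lambda>i. 0)"
  have fin: "finite (pg_vecs n :: (nat \<Rightarrow> 'a) set)" by (rule finite_vecs)
  let ?B = "{v \<in> pg_vecs n. proj n w r v \<noteq> (\<lambda>i. 0) \<and> pg_dot n u (proj n w r v) = 0}"
  let ?A = "{v \<in> pg_vecs n. pg_dot n u (proj n w r v) = 0}"
  have fB: "finite ?B" by (rule finite_subset[OF _ fin]) auto
  have fA: "finite ?A" by (rule finite_subset[OF _ fin]) auto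
  have fH: "finite (Hyp n u)" using finite_points Hyp_sub by (rule finite_subset[rotated])
  have im: "(\<lambda>v. pg_point (proj n w r v)) ` ?B \<subseteq> Hyp n u"
    using r by (auto simp: pp_in_Hyp proj_vecs)
  have seteq: "{v \<in> pg_vecs n. proj n w r v \<in> P} = {v \<in> ?B. pg_point (proj n w r v) = P}"
    if P: "P \<in> Hyp n u" for P
  proof (intro equalityI subsetI)
    fix v assume v: "v \<in> {v \<in> pg_vecs n. proj n w r v \<in> P}"
    have Pp: "P \<in> pg_points n" using P Hyp_sub by blast
    have rep: "P = pg_point (proj n w r v) \<and> proj n w r v \<in> pg_vecs n \<and> proj n w r v \<noteq> (\<lambda>i. 0)"
      using point_mem_rep[OF Pp] v by blast
    hence "pg_point (proj n w r v) \<in> Hyp n u" using P by simp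
    hence "pg_dot n u (proj n w r v) = 0" by (simp add: pp_in_Hyp)
    thus "v \<in> {v \<in> ?B. pg_point (proj n w r v) = P}" using rep v by simp
  next
    fix v assume v: "v \<in> {v \<in> ?B. pg_point (proj n w r v) = P}"
    hence "pg_point (proj n w r v) = P" by simp
    hence "proj n w r v \<in> P" using pp_mem[of "proj n w r v"] by simp
    thus "v \<in> {v \<in> pg_vecs n. proj n w r v \<in> P}" using v by simp
  qed
  have "(\<Sum>P\<in>Hyp n u. push n w r c P) = (\<Sum>P\<in>Hyp n u. \<Sum>v\<in>{v \<in> ?B. pg_point (proj n w r v) = P}. c (pg_point v))"
  proof (rule sum.cong[OF refl])
    fix P assume P: "P \<in> Hyp n u"
    hence "P \<in> pg_points n" using Hyp_sub by blast
    thus "push n w r c P = (\<Sum>v\<in>{v \<in> ?B. pg_point (proj n w r v) = P}. c (pg_point v))"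
      unfolding push_def using seteq[OF P] by simp
  qed
  also have "\<dots> = (\<Sum>v\<in>?B. c (pg_point v))" by (rule sum.group[OF fB fH im])
  also have "\<dots> = (\<Sum>v\<in>?A. c (pg_point v))"
    by (rule sum.mono_neutral_left[OF fA]) (auto intro: ker_vanish[OF c wr cr])
  also have "?A = {v \<in> pg_vecs n. pg_dot n (\<lambda>i. u i - pg_dot n u r * w i) v = 0}"
    by (simp add: dot_proj)
  also have "(\<Sum>v\<in>\<dots>. c (pg_point v)) = 0"
  proof (cases "(\<lambda>i. u i - pg_dot n u r * w i) = (\<lambda>i. 0)")
    case True
    hence "{v \<in> pg_vecs n. pg_dot n (\<lambda>i. u i - pg_dot n u r * w i) v = 0} = pg_vecs n"
      by (simp add: dot_zero)
    thus ?thesis using total_dual[OF c n] by simp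
  next
    case False
    have "(\<lambda>i. u i - pg_dot n u r * w i) \<in> pg_vecs n" using u w by (simp add: pg_vecs_def)
    thus ?thesis by (rule vec_hyp[OF c _ False])
  qed
  finally show "(\<Sum>P\<in>Hyp n u. push n w r c P) = 0" .
qed

lemma card_image_lt:
  assumes "finite A" "x \<in> A" "y \<in> A" "x \<noteq> y" "f x = f y"
  shows "card (f ` A) < card A"
proof -
  have "f ` A = f ` (A - {y})" using assms by (auto simp: image_iff) (metis DiffI singletonD)
  hence "card (f ` A) \<le> card (A - {y})" by (simp add: card_image_le assms(1))
  also have "\<dots> < card A"
  proof -
    have "card A > 0" using assms(1,2) card_gt_0_iff by blast
    thus ?thesis using assms by simp
  qed
  finally show ?thesis .
qed

definition G :: "nat \<Rightarrow> (nat \<Rightarrow> 'a::field) \<Rightarrow> (nat \<Rightarrow> 'a) \<Rightarrow> (nat \<Rightarrow> 'a) set \<Rightarrow> (nat \<Rightarrow> 'a) set" where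
  "G n w r P = pg_point (proj n w r (SOME v. v \<in> P))"

lemma G_pp: "G n w r (pg_point v) = pg_point (proj n w r v)"
proof -
  have "(SOME x. x \<in> pg_point v) \<in> pg_point v" by (rule someI[where x=v]) (rule pp_mem)
  then obtain a where a: "a \<noteq> 0" "(SOME x. x \<in> pg_point v) = smul a v" using pp_memE by blast
  show ?thesis unfolding G_def a(2) proj_smul using pp_scale[OF a(1)] by simp
qed

lemma push_supp:
  fixes c :: "(nat \<Rightarrow> 'a::{finite,field}) set \<Rightarrow> 'a"
  assumes c: "c \<in> pg_dual_code n" and r: "r \<in> pg_vecs n"
  shows "pg_supp n (push n w r c) \<subseteq> G n w r ` pg_supp n c"
proof
  fix P assume P: "P \<in> pg_supp n (push n w r c)"
  hence Pp: "P \<in> pg_points n" and s: "(\<Sum>v\<in>{v \<in> pg_vecs n. proj n w r v \<in> P}. c (pg_point v)) \<noteq> 0"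
    by (auto simp: pg_supp_def push_def)
  then obtain v where v: "v \<in> pg_vecs n" "proj n w r v \<in> P" "c (pg_point v) \<noteq> 0"
    by (metis (mono_tags, lifting) mem_Collect_eq sum.neutral)
  have rep: "P = pg_point (proj n w r v)" using point_mem_rep[OF Pp v(2)] by blast
  have v0: "v \<noteq> (\<lambda>i. 0)" using v(3) dual_zero[OF c] by metis
  have "pg_point v \<in> pg_supp n c" using v v0 by (simp add: pg_supp_def pp_in_points)
  moreover have "P = G n w r (pg_point v)" by (simp add: G_pp rep)
  ultimately show "P \<in> G n w r ` pg_supp n c" by blast
qed

lemma push_weight:
  fixes c :: "(nat \<Rightarrow> 'a::{finite,field}) set \<Rightarrow> 'a"
  assumes c: "c \<in> pg_dual_code n" and r: "r \<in> pg_vecs n"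
    and A: "A1 \<in> pg_supp n c" "A2 \<in> pg_supp n c" "A1 \<noteq> A2" "G n w r A1 = G n w r A2"
  shows "pg_weight n (push n w r c) < pg_weight n c"
proof -
  have fin: "finite (pg_supp n c)"
    by (rule finite_subset[OF _ finite_points]) (auto simp: pg_supp_def)
  have "card (pg_supp n (push n w r c)) \<le> card (G n w r ` pg_supp n c)"
    by (rule card_mono[OF finite_imageI[OF fin] push_supp[OF c r]])
  also have "\<dots> < card (pg_supp n c)" by (rule card_image_lt[OF fin A])
  finally show ?thesis by (simp add: pg_weight_def)
qed

lemma push_nonzero:
  fixes c :: "(nat \<Rightarrow> 'a::{finite,field}) set \<Rightarrow> 'a"
  assumes c: "c \<in> pg_dual_code n" and r: "r \<in> pg_vecs n" and wr: "pg_dot n w r = 1"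
    and cr: "c (pg_point r) = 0" and b: "b \<in> pg_vecs n" and cb: "c (pg_point b) \<noteq> 0"
    and tang: "\<And>s. c (pg_point (\<lambda>i. b i + s * r i)) \<noteq> 0 \<Longrightarrow> s = 0"
  shows "pg_supp n (push n w r c) \<noteq> {}"
proof -
  have pb0: "proj n w r b \<noteq> (\<lambda>i. 0)" using ker_vanish[OF c wr cr] cb by blast
  define P0 where "P0 = pg_point (proj n w r b)"
  have P0: "P0 \<in> pg_points n" unfolding P0_def using pb0 proj_vecs[OF b r] by (simp add: pp_in_points)
  have b0: "b \<noteq> (\<lambda>i. 0)" using cb dual_zero[OF c] by metis
  let ?T = "{v \<in> pg_vecs n. proj n w r v \<in> P0}"
  have fT: "finite ?T" by (rule finite_subset[OF _ finite_vecs]) auto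
  have sub: "pg_point b \<subseteq> ?T"
  proof
    fix v assume "v \<in> pg_point b"
    then obtain a where a: "a \<noteq> 0" "v = smul a b" using pp_memE by blast
    have "proj n w r v = smul a (proj n w r b)" by (simp add: a proj_smul)
    hence "proj n w r v \<in> P0" unfolding P0_def using a(1) by (simp add: pp_memI)
    thus "v \<in> ?T" using a b by simp
  qed
  have out: "c (pg_point v) = 0" if v: "v \<in> ?T - pg_point b" for v
  proof (rule ccontr)
    assume cv: "c (pg_point v) \<noteq> 0"
    have vV: "v \<in> pg_vecs n" and pv: "proj n w r v \<in> P0" using v by auto
    obtain a where a: "a \<noteq> 0" "proj n w r v = smul a (proj n w r b)" using pv pp_memE unfolding P0_def by blast
    hence "proj n w r v = proj n w r (smul a b)" by (simp add: proj_smul)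
    hence ve: "v = (\<lambda>i. smul a b i + (pg_dot n w v - pg_dot n w (smul a b)) * r i)" by (rule proj_eq)
    define s where "s = pg_dot n w v - pg_dot n w (smul a b)"
    have "smul (1/a) v = (\<lambda>i. b i + (s / a) * r i)"
      using a(1) by (subst ve) (simp add: fun_eq_iff s_def field_simps)
    hence "pg_point v = pg_point (\<lambda>i. b i + (s / a) * r i)"
      using pp_scale[of "1/a" v] a(1) by simp
    hence "s / a = 0" using tang cv by metis
    hence "s = 0" using a(1) by simp
    hence "v = smul a b" using ve by (simp add: s_def[symmetric] fun_eq_iff)
    thus False using v a(1) pp_memI by blast
  qed
  have "push n w r c P0 = (\<Sum>v\<in>?T. c (pg_point v))" using P0 by (simp add: push_def)
  also have "\<dots> = (\<Sum>v\<in>pg_point b. c (pg_point v))"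
    by (rule sum.mono_neutral_right[OF fT sub]) (use out in blast)
  also have "\<dots> = (\<Sum>v\<in>pg_point b. c (pg_point b))"
  proof (rule sum.cong[OF refl])
    fix v assume "v \<in> pg_point b"
    hence "pg_point b = pg_point v" by (simp add: pp_eq_iff)
    thus "c (pg_point v) = c (pg_point b)" by simp
  qed
  also have "\<dots> = - c (pg_point b)" using card_point[OF b0] qm1[where 'a='a] by simp
  finally have "push n w r c P0 \<noteq> 0" using cb by simp
  thus ?thesis using P0 by (auto simp: pg_supp_def)
qed

definition LL :: "nat \<Rightarrow> (nat \<Rightarrow> 'a::field) set" where
  "LL j = {v. \<forall>i. i \<noteq> 0 \<longrightarrow> i \<noteq> j \<longrightarrow> v i = 0}"

definition c2 :: "nat \<Rightarrow> (nat \<Rightarrow> 'a::field) set \<Rightarrow> 'a" where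
  "c2 n P = (if P \<in> pg_points n then (if P \<subseteq> LL 1 then 1 else 0) - (if P \<subseteq> LL 2 then 1 else 0) else 0)"

lemma LL_pp: "pg_point v \<subseteq> LL j \<longleftrightarrow> v \<in> LL j"
proof
  assume "pg_point v \<subseteq> LL j" thus "v \<in> LL j" using pp_mem by blast
next
  assume "v \<in> LL j" thus "pg_point v \<subseteq> LL j" by (auto simp: LL_def dest!: pp_memE)
qed

lemma dot_comm: "pg_dot n u v = pg_dot n v u" by (simp add: pg_dot_def mult.commute)

lemma of_nat_card_zero_cases:
  assumes "card A = card (UNIV::'a set) \<or> card A = card (UNIV::'a set) * card (UNIV::'a set)"
  shows "of_nat (card A) = (0::'a::{finite,field})"
  using assms card0[where 'a='a] by auto

lemma card_K:
  fixes x y :: "'a::{finite,field}"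
  shows "of_nat (card {(a,b). a * x + b * y = 0}) = (0::'a)"
proof (rule of_nat_card_zero_cases)
  show "card {(a,b). a * x + b * y = 0} = card (UNIV::'a set) \<or>
        card {(a,b). a * x + b * y = 0} = card (UNIV::'a set) * card (UNIV::'a set)"
  proof (cases "y = 0")
    case False
    have "{(a,b). a * x + b * y = 0} = (\<lambda>a. (a, - a * x / y)) ` UNIV"
      using False by (auto simp: field_simps add_eq_0_iff image_iff)
    moreover have "inj (\<lambda>a::'a. (a, - a * x / y))" by (rule injI) simp
    ultimately show ?thesis by (simp add: card_image)
  next
    case True
    show ?thesis
    proof (cases "x = 0")
      case False
      have "{(a,b). a * x + b * y = 0} = (\<lambda>b. (0, b)) ` UNIV"
        using False True by (auto simp: image_iff)
      moreover have "inj (\<lambda>b::'a. (0::'a, b))" by (rule injI) simp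
      ultimately show ?thesis by (simp add: card_image)
    next
      case False': True
      have "{(a,b). a * x + b * y = 0} = (UNIV :: ('a \<times> 'a) set)"
        using True False' by auto
      thus ?thesis by (simp add: card_cartesian_product[symmetric])
    qed
  qed
qed

lemma card_L:
  fixes u :: "nat \<Rightarrow> 'a::{finite,field}"
  assumes j: "j \<noteq> 0" "j \<le> n"
  shows "of_nat (card {v \<in> pg_vecs n. pg_dot n u v = 0 \<and> v \<in> LL j}) = (0::'a)"
proof -
  define \<phi> where "\<phi> = (\<lambda>(a::'a,b::'a). (\<lambda>i::nat. if i = 0 then a else if i = j then b else 0))"
  have inj: "inj \<phi>" unfolding \<phi>_def
    by (rule injI) (auto simp: fun_eq_iff split: prod.splits, metis assms(1), metis assms(1))
  have dphi: "pg_dot n u (\<phi> (a,b)) = a * u 0 + b * u j" for a b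
    unfolding \<phi>_def using dot_two[of 0 j n a b u] j by (simp add: dot_comm)
  have "{v \<in> pg_vecs n. pg_dot n u v = 0 \<and> v \<in> LL j} = \<phi> ` {(a,b). a * u 0 + b * u j = 0}"
  proof (intro equalityI subsetI)
    fix v assume v: "v \<in> {v \<in> pg_vecs n. pg_dot n u v = 0 \<and> v \<in> LL j}"
    have ve: "v = \<phi> (v 0, v j)" using v unfolding \<phi>_def LL_def by (auto simp: fun_eq_iff)
    have "pg_dot n u (\<phi> (v 0, v j)) = 0" using v ve by simp
    hence "(v 0, v j) \<in> {(a,b). a * u 0 + b * u j = 0}" by (simp add: dphi)
    thus "v \<in> \<phi> ` {(a,b). a * u 0 + b * u j = 0}" using ve by blast
  next
    fix v assume "v \<in> \<phi> ` {(a,b). a * u 0 + b * u j = 0}"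
    then obtain a b where ab: "a * u 0 + b * u j = 0" "v = \<phi> (a,b)" by auto
    have "v \<in> pg_vecs n" using ab(2) j unfolding \<phi>_def pg_vecs_def by auto
    moreover have "v \<in> LL j" using ab(2) unfolding \<phi>_def LL_def by auto
    moreover have "pg_dot n u v = 0" using ab by (simp add: dphi)
    ultimately show "v \<in> {v \<in> pg_vecs n. pg_dot n u v = 0 \<and> v \<in> LL j}" by simp
  qed
  hence "card {v \<in> pg_vecs n. pg_dot n u v = 0 \<and> v \<in> LL j} = card {(a,b). a * u 0 + b * u j = (0::'a)}"
    using inj by (simp add: card_image inj_on_subset[OF inj])
  thus ?thesis using card_K by simp
qed

lemma sum_ind: "finite A \<Longrightarrow> (\<Sum>v\<in>A. if P v then 1 else 0) = (of_nat (card {v\<in>A. P v}) :: 'b::comm_ring_1)"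
  by (simp add: sum.inter_filter[symmetric])

lemma c2_pp: "v \<in> pg_vecs n \<Longrightarrow> v \<noteq> (\<lambda>i. 0) \<Longrightarrow>
   c2 n (pg_point v) = (if v \<in> LL 1 then 1 else 0) - (if v \<in> LL 2 then 1 else 0)"
  by (simp add: c2_def pp_in_points LL_pp)

lemma c2_dual:
  assumes n: "n \<ge> 2"
  shows "(c2 n :: (nat \<Rightarrow> 'a::{finite,field}) set \<Rightarrow> 'a) \<in> pg_dual_code n"
proof (rule dual_intro)
  fix P :: "(nat \<Rightarrow> 'a) set"
  show "c2 n P \<in> prime_field" unfolding c2_def using pf_0 pf_1 pf_m1 by auto
next
  fix P :: "(nat \<Rightarrow> 'a) set" assume "P \<notin> pg_points n" thus "c2 n P = 0" by (simp add: c2_def)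
next
  fix u :: "nat \<Rightarrow> 'a" assume u: "u \<in> pg_vecs n" "u \<noteq> (\<lambda>i. 0)"
  define h :: "(nat \<Rightarrow> 'a) \<Rightarrow> 'a" where "h = (\<lambda>v. (if v \<in> LL 1 then 1 else 0) - (if v \<in> LL 2 then 1 else 0))"
  let ?S = "{v \<in> pg_vecs n. pg_dot n u v = (0::'a)}"
  have fS: "finite ?S" by (rule finite_subset[OF _ finite_vecs]) auto
  have h0: "h (\<lambda>i. 0) = 0" by (simp add: h_def LL_def)
  have "(\<Sum>v\<in>?S. h v) = of_nat (card {v\<in>?S. v \<in> LL 1}) - of_nat (card {v\<in>?S. v \<in> LL 2})"
    unfolding h_def by (simp add: sum_subtractf sum_ind[OF fS])
  also have "\<dots> = 0" using card_L[of 1 n u] card_L[of 2 n u] n by (simp add: conj_ac)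
  finally have "(\<Sum>v\<in>?S. h v) = 0" .
  hence "(\<Sum>v\<in>{v \<in> ?S. v \<noteq> (\<lambda>i. 0)}. h v) = 0" using drop0[OF fS, of h] h0 by simp
  moreover have "{v \<in> ?S. v \<noteq> (\<lambda>i. 0)} = {v \<in> pg_vecs n. v \<noteq> (\<lambda>i. 0) \<and> pg_dot n u v = 0}" by blast
  ultimately have "(\<Sum>v\<in>{v \<in> pg_vecs n. v \<noteq> (\<lambda>i. 0) \<and> pg_dot n u v = 0}. c2 n (pg_point v)) = 0"
    by (simp add: c2_pp h_def)
  hence "of_nat (card (UNIV::'a set) - 1) * (\<Sum>P\<in>Hyp n u. c2 n P) = 0" by (simp add: FIB)
  thus "(\<Sum>P\<in>Hyp n u. c2 n P) = (0::'a)" using qm1[where 'a='a] by simp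
qed

lemma c2_supp_ne:
  assumes n: "n \<ge> 2"
  shows "pg_supp n (c2 n :: (nat \<Rightarrow> 'a::{finite,field}) set \<Rightarrow> 'a) \<noteq> {}"
proof -
  let ?e = "(\<lambda>i. if i = 1 then 1 else 0) :: nat \<Rightarrow> 'a"
  have e: "?e \<in> pg_vecs n" "?e \<noteq> (\<lambda>i. 0)" using n by (auto simp: pg_vecs_def fun_eq_iff)
  have "?e \<in> LL 1" "?e \<notin> LL 2" by (auto simp: LL_def)
  hence c: "c2 n (pg_point ?e) = 1" using c2_pp[OF e] by simp
  have pe: "pg_point ?e \<in> pg_points n" by (rule pp_in_points[OF e])
  have "pg_point ?e \<in> pg_supp n (c2 n)" unfolding pg_supp_def using pe c by simp
  thus ?thesis by blast
qed

lemma c2_weight: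
  assumes n: "n \<ge> 2"
  shows "pg_weight n (c2 n :: (nat \<Rightarrow> 'a::{finite,field}) set \<Rightarrow> 'a) \<le> 2 * card (UNIV::'a set)"
proof -
  define f1 where "f1 = (\<lambda>t::'a. pg_point (\<lambda>i. if i = 0 then t else if i = 1 then 1 else 0))"
  define f2 where "f2 = (\<lambda>t::'a. pg_point (\<lambda>i. if i = 0 then t else if i = 2 then 1 else 0))"
  have sub: "pg_supp n (c2 n :: (nat \<Rightarrow> 'a) set \<Rightarrow> 'a) \<subseteq> f1 ` UNIV \<union> f2 ` UNIV"
  proof
    fix P assume P: "P \<in> pg_supp n (c2 n :: (nat \<Rightarrow> 'a) set \<Rightarrow> 'a)"
    hence Pp: "P \<in> pg_points n" and cP: "c2 n P \<noteq> 0" by (auto simp: pg_supp_def)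
    then obtain v where v: "v \<in> pg_vecs n" "v \<noteq> (\<lambda>i. 0)" "P = pg_point v" unfolding points_iff by blast
    have cv: "(if v \<in> LL 1 then 1 else 0) - (if v \<in> LL 2 then 1 else 0) \<noteq> (0::'a)"
      using cP c2_pp[OF v(1,2)] v(3) by simp
    show "P \<in> f1 ` UNIV \<union> f2 ` UNIV"
    proof (cases "v \<in> LL 1")
      case True
      hence "v \<notin> LL 2" using cv by auto
      have v1: "v 1 \<noteq> 0"
      proof
        assume "v 1 = 0"
        hence "v \<in> LL 2" using True by (auto simp: LL_def)
        thus False using \<open>v \<notin> LL 2\<close> by simp
      qed
      have "v = smul (v 1) (\<lambda>i. if i = 0 then v 0 / v 1 else if i = 1 then 1 else 0)"
        using True v1 by (auto simp: fun_eq_iff LL_def)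
      hence "P = f1 (v 0 / v 1)" unfolding f1_def using v(3) pp_scale[OF v1] by metis
      thus ?thesis by blast
    next
      case False
      hence L2: "v \<in> LL 2" using cv by (auto split: if_splits)
      have v2: "v 2 \<noteq> 0"
      proof
        assume "v 2 = 0"
        hence "v \<in> LL 1" using L2 by (auto simp: LL_def)
        thus False using False by simp
      qed
      have "v = smul (v 2) (\<lambda>i. if i = 0 then v 0 / v 2 else if i = 2 then 1 else 0)"
        using L2 v2 by (auto simp: fun_eq_iff LL_def)
      hence "P = f2 (v 0 / v 2)" unfolding f2_def using v(3) pp_scale[OF v2] by metis
      thus ?thesis by blast
    qed
  qed
  have "card (pg_supp n (c2 n :: (nat \<Rightarrow> 'a) set \<Rightarrow> 'a)) \<le> card (f1 ` UNIV \<union> f2 ` UNIV)"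
    by (rule card_mono[OF _ sub]) simp
  also have "\<dots> \<le> card (f1 ` UNIV) + card (f2 ` UNIV)" by (rule card_Un_le)
  also have "\<dots> \<le> card (UNIV::'a set) + card (UNIV::'a set)" by (intro add_mono card_image_le) simp_all
  finally show ?thesis by (simp add: pg_weight_def)
qed

definition ee :: "nat \<Rightarrow> nat \<Rightarrow> 'a::field" where "ee k = (\<lambda>i. if i = k then 1 else 0)"

lemma ee_inj: "inj (ee :: nat \<Rightarrow> nat \<Rightarrow> 'a::field)"
  by (rule injI) (metis ee_def one_neq_zero)

lemma ee_indep: "fv.independent ((ee :: nat \<Rightarrow> nat \<Rightarrow> 'a::field) ` {..n})"
proof
  assume "fv.dependent ((ee :: nat \<Rightarrow> nat \<Rightarrow> 'a) ` {..n})"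
  then obtain u where u: "\<exists>v\<in>ee ` {..n}. u v \<noteq> 0" "(\<Sum>v\<in>ee ` {..n}. (\<lambda>i. u v * v i)) = (0::nat \<Rightarrow> 'a)"
    using fv.dependent_finite[of "ee ` {..n}"] by auto
  then obtain j where j: "j \<le> n" "u (ee j) \<noteq> 0" by auto
  have "(\<Sum>v\<in>ee ` {..n}. (\<lambda>i. u v * v i)) j = 0" using u(2) by simp
  hence "(\<Sum>v\<in>ee ` {..n}. u v * v j) = (0::'a)" by (simp add: sum_apply_fun)
  hence "(\<Sum>i\<le>n. u (ee i) * ee i j) = (0::'a)"
    by (simp add: sum.reindex inj_on_subset[OF ee_inj])
  moreover have "(\<Sum>i\<le>n. u (ee i) * ee i j) = u (ee j)"
  proof -
    have "(\<Sum>i\<le>n. u (ee i) * ee i j) = (\<Sum>i\<le>n. if i = j then u (ee j) else (0::'a))"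
      by (rule sum.cong) (auto simp: ee_def)
    thus ?thesis using j(1) by simp
  qed
  ultimately show False using j(2) by simp
qed

lemma ee_vecs: "k \<le> n \<Longrightarrow> ee k \<in> pg_vecs n" by (simp add: ee_def pg_vecs_def)

lemma EXT:
  assumes B: "B \<subseteq> pg_vecs n" "fv.independent B" "card B < Suc n"
  shows "\<exists>x\<in>pg_vecs n. x \<notin> fv.span (B :: (nat \<Rightarrow> 'a::{finite,field}) set)"
proof (rule ccontr)
  assume "\<not> ?thesis"
  hence "ee ` {..n} \<subseteq> fv.span B" using ee_vecs by blast
  moreover have fB: "finite B" using B(1) finite_vecs finite_subset by blast
  ultimately have "card ((ee :: nat \<Rightarrow> nat \<Rightarrow> 'a) ` {..n}) \<le> card B"
    using fv.independent_span_bound[OF fB ee_indep] by blast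
  moreover have "card ((ee :: nat \<Rightarrow> nat \<Rightarrow> 'a) ` {..n}) = Suc n"
    by (simp add: card_image inj_on_subset[OF ee_inj])
  ultimately show False using B(3) by simp
qed

lemma EXT3:
  assumes "B \<subseteq> pg_vecs n" "fv.independent B" "card B \<le> 3" "n \<ge> 2"
  shows "\<exists>B'. B \<subseteq> B' \<and> B' \<subseteq> pg_vecs n \<and> fv.independent B' \<and> card (B' :: (nat \<Rightarrow> 'a::{finite,field}) set) = 3"
  using assms
proof (induction "3 - card B" arbitrary: B)
  case 0
  thus ?case by (intro exI[of _ B]) simp
next
  case (Suc k)
  have fB: "finite B" using Suc.prems(1) finite_vecs finite_subset by blast
  obtain x where x: "x \<in> pg_vecs n" "x \<notin> fv.span B"
    using EXT[OF Suc.prems(1,2)] Suc.hyps(2) Suc.prems(4) by force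
  have xB: "x \<notin> B" using x(2) fv.span_base by blast
  have i: "fv.independent (insert x B)" using fv.independent_insertI[OF x(2) Suc.prems(2)] .
  have c: "card (insert x B) = Suc (card B)" using fB xB by simp
  have k: "k = 3 - card (insert x B)" using c Suc.hyps(2) by simp
  have c3: "card (insert x B) \<le> 3" using c Suc.hyps(2) by simp
  have "\<exists>B'. insert x B \<subseteq> B' \<and> B' \<subseteq> pg_vecs n \<and> fv.independent B' \<and> card B' = 3"
    by (rule Suc.hyps(1)[OF k _ i c3 Suc.prems(4)]) (use Suc.prems(1) x(1) in auto)
  thus ?case by blast
qed

lemma plane_from:
  fixes u1 u2 u3 :: "nat \<Rightarrow> 'a::{finite,field}"
  assumes d: "u1 \<noteq> u2" "u2 \<noteq> u3" "u1 \<noteq> u3" and V: "{u1,u2,u3} \<subseteq> pg_vecs n"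
    and ind: "fv.independent {u1,u2,u3}"
  shows "{P \<in> pg_points n. \<exists>a b d. (\<lambda>i. a * u1 i + b * u2 i + d * u3 i) \<in> P} \<in> pg_planes n"
proof -
  have comb: "(\<Sum>x\<in>{u1,u2,u3}. (\<lambda>i. f x * x i)) = (\<lambda>i. f u1 * u1 i + f u2 * u2 i + f u3 * u3 i)" for f
    using d by (simp add: fun_eq_iff add.assoc)
  have "a = 0 \<and> b = 0 \<and> dd = 0" if z: "(\<lambda>i. a * u1 i + b * u2 i + dd * u3 i) = (\<lambda>i. 0)" for a b dd
  proof (rule ccontr)
    assume nz: "\<not> (a = 0 \<and> b = 0 \<and> dd = 0)"
    define f where "f = (\<lambda>x. if x = u1 then a else if x = u2 then b else dd)"
    have "f u1 = a" "f u2 = b" "f u3 = dd" using d by (auto simp: f_def)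
    hence "(\<Sum>x\<in>{u1,u2,u3}. (\<lambda>i. f x * x i)) = 0" using z comb[of f] by (simp add: fun_eq_iff)
    moreover have "\<exists>v\<in>{u1,u2,u3}. f v \<noteq> 0" using nz \<open>f u1 = a\<close> \<open>f u2 = b\<close> \<open>f u3 = dd\<close> by auto
    ultimately have "fv.dependent {u1,u2,u3}" using fv.dependent_finite[of "{u1,u2,u3}"] by blast
    thus False using ind by simp
  qed
  thus ?thesis using V unfolding pg_planes_def by blast
qed

lemma in_span3:
  fixes u1 u2 u3 :: "nat \<Rightarrow> 'a::{finite,field}"
  assumes d: "u1 \<noteq> u2" "u2 \<noteq> u3" "u1 \<noteq> u3" and v: "v \<in> fv.span {u1,u2,u3}"
  shows "\<exists>a b dd. v = (\<lambda>i. a * u1 i + b * u2 i + dd * u3 i)"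
proof -
  obtain f where f: "v = (\<Sum>x\<in>{u1,u2,u3}. (\<lambda>i. f x * x i))"
    using v fv.span_finite[of "{u1,u2,u3}"] by auto
  have "(\<Sum>x\<in>{u1,u2,u3}. (\<lambda>i. f x * x i)) = (\<lambda>i. f u1 * u1 i + f u2 * u2 i + f u3 * u3 i)"
    using d by (simp add: fun_eq_iff add.assoc)
  thus ?thesis using f by blast
qed

lemma four_elems:
  assumes "finite B" "card B \<ge> 4"
  shows "\<exists>a1 a2 a3 b. a1 \<in> B \<and> a2 \<in> B \<and> a3 \<in> B \<and> b \<in> B \<and> a1 \<noteq> a2 \<and> a1 \<noteq> a3 \<and> a1 \<noteq> b \<and> a2 \<noteq> a3 \<and> a2 \<noteq> b \<and> a3 \<noteq> b"
proof -
  have ne: "A \<noteq> {}" if "card A \<ge> 1" for A :: "'a set" using that by (intro notI) simp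
  obtain a1 where a1: "a1 \<in> B" using ne[of B] assms by fastforce
  have c1: "card (B - {a1}) \<ge> 3" using assms a1 by (simp add: card_Diff_singleton)
  obtain a2 where a2: "a2 \<in> B - {a1}" using ne[of "B - {a1}"] c1 by fastforce
  have c2: "card (B - {a1} - {a2}) \<ge> 2" using c1 a2 assms by (simp add: card_Diff_singleton)
  obtain a3 where a3: "a3 \<in> B - {a1} - {a2}" using ne[of "B - {a1} - {a2}"] c2 by fastforce
  have c3: "card (B - {a1} - {a2} - {a3}) \<ge> 1" using c2 a3 assms by (simp add: card_Diff_singleton)
  obtain b where b: "b \<in> B - {a1} - {a2} - {a3}" using ne[of "B - {a1} - {a2} - {a3}"] c3 by fastforce
  show ?thesis using a1 a2 a3 b by blast
qed

lemma indep4: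
  fixes a1 a2 a3 b :: "nat \<Rightarrow> 'a::{finite,field}"
  assumes d: "a1 \<noteq> a2" "a1 \<noteq> a3" "a1 \<noteq> b" "a2 \<noteq> a3" "a2 \<noteq> b" "a3 \<noteq> b"
    and ind: "fv.independent {a1,a2,a3,b}"
    and z: "(\<lambda>i. x1 * a1 i + x2 * a2 i + x3 * a3 i + x4 * b i) = (\<lambda>i. 0)"
  shows "x1 = 0 \<and> x2 = 0 \<and> x3 = 0 \<and> x4 = 0"
proof (rule ccontr)
  assume nz: "\<not> (x1 = 0 \<and> x2 = 0 \<and> x3 = 0 \<and> x4 = 0)"
  define f where "f = (\<lambda>x. if x = a1 then x1 else if x = a2 then x2 else if x = a3 then x3 else x4)"
  have fv: "f a1 = x1" "f a2 = x2" "f a3 = x3" "f b = x4" using d by (auto simp: f_def)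
  have "(\<Sum>x\<in>{a1,a2,a3,b}. (\<lambda>i. f x * x i)) = (\<lambda>i. f a1 * a1 i + f a2 * a2 i + f a3 * a3 i + f b * b i)"
    using d by (simp add: fun_eq_iff add.assoc)
  hence "(\<Sum>x\<in>{a1,a2,a3,b}. (\<lambda>i. f x * x i)) = 0" using z fv by (simp add: fun_eq_iff)
  moreover have "\<exists>v\<in>{a1,a2,a3,b}. f v \<noteq> 0" using nz fv by auto
  ultimately have "fv.dependent {a1,a2,a3,b}" using fv.dependent_finite[of "{a1,a2,a3,b}"] by blast
  thus False using ind by simp
qed

definition co1 :: "nat \<Rightarrow> 'a::field" where "co1 k = (if k = 2 then 0 else 1)"
definition co2 :: "nat \<Rightarrow> 'a \<Rightarrow> 'a::field" where "co2 k t = (if k = 0 then t else if k = 1 then 0 else 1)"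
definition co3 :: "nat \<Rightarrow> 'a \<Rightarrow> 'a::field" where "co3 k t = (if k = 0 then 0 else t)"

lemma k3: "(k::nat) < 3 \<Longrightarrow> k = 0 \<or> k = 1 \<or> k = 2" by auto

lemma co_inj:
  fixes t t' l :: "'a::field"
  assumes "k < 3" "k' < 3" "t \<noteq> 0" "t' \<noteq> 0"
    "co1 k' = l * co1 k" "co2 k' t' = l * co2 k t" "co3 k' t' = l * co3 k t"
  shows "k = k' \<and> t = t'"
  using k3[OF assms(1)] k3[OF assms(2)] assms(3-) by (auto simp: co1_def co2_def co3_def)

lemma co_ne1: "k < 3 \<Longrightarrow> t \<noteq> 0 \<Longrightarrow> \<not> (co2 k t = (0::'a::field) \<and> co3 k t = 0)"
  using k3 by (auto simp: co1_def co2_def co3_def)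
lemma co_ne2: "k < 3 \<Longrightarrow> t \<noteq> 0 \<Longrightarrow> \<not> (co1 k = (0::'a::field) \<and> co3 k t = 0)"
  using k3 by (auto simp: co1_def co2_def co3_def)
lemma co_ne3: "k < 3 \<Longrightarrow> t \<noteq> 0 \<Longrightarrow> \<not> (co1 k = (0::'a::field) \<and> co2 k t = 0)"
  using k3 by (auto simp: co1_def co2_def co3_def)

lemma dot_lin: "pg_dot n w (\<lambda>i. x i + t * y i) = pg_dot n w x + t * pg_dot n w y"
  by (simp add: pg_dot_def algebra_simps sum.distrib sum_distrib_left)

lemma dot_unit: "j \<le> n \<Longrightarrow> pg_dot n (\<lambda>i. if i = j then a else 0) v = a * v j"
proof -
  assume j: "j \<le> n"
  have "pg_dot n (\<lambda>i. if i = j then a else 0) v = (\<Sum>i\<le>n. if i = j then a * v j else 0)"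
    unfolding pg_dot_def by (rule sum.cong) auto
  thus ?thesis using j by simp
qed

locale quad =
  fixes a1 a2 a3 b :: "nat \<Rightarrow> 'a::{finite,field}"
  assumes ind: "\<And>x1 x2 x3 x4. (\<lambda>i. x1 * a1 i + x2 * a2 i + x3 * a3 i + x4 * b i) = (\<lambda>i. 0) \<Longrightarrow> x1 = 0 \<and> x2 = 0 \<and> x3 = 0 \<and> x4 = 0"
begin

definition comb :: "'a \<Rightarrow> 'a \<Rightarrow> 'a \<Rightarrow> 'a \<Rightarrow> nat \<Rightarrow> 'a" where
  "comb x1 x2 x3 x4 = (\<lambda>i. x1 * a1 i + x2 * a2 i + x3 * a3 i + x4 * b i)"

lemma comb_inj: "comb x1 x2 x3 x4 = comb y1 y2 y3 y4 \<Longrightarrow> x1 = y1 \<and> x2 = y2 \<and> x3 = y3 \<and> x4 = y4"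
proof -
  assume e: "comb x1 x2 x3 x4 = comb y1 y2 y3 y4"
  have "(\<lambda>i. (x1 - y1) * a1 i + (x2 - y2) * a2 i + (x3 - y3) * a3 i + (x4 - y4) * b i) = (\<lambda>i. 0)"
  proof
    fix i
    have "comb x1 x2 x3 x4 i = comb y1 y2 y3 y4 i" using e by simp
    thus "(x1 - y1) * a1 i + (x2 - y2) * a2 i + (x3 - y3) * a3 i + (x4 - y4) * b i = 0"
      by (simp add: comb_def algebra_simps)
  qed
  thus ?thesis using ind by fastforce
qed

lemma comb_zero: "comb x1 x2 x3 x4 = (\<lambda>i. 0) \<Longrightarrow> x1 = 0 \<and> x2 = 0 \<and> x3 = 0 \<and> x4 = 0"
  using ind unfolding comb_def by blast

lemma smul_comb: "smul l (comb x1 x2 x3 x4) = comb (l*x1) (l*x2) (l*x3) (l*x4)"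
  by (simp add: comb_def fun_eq_iff algebra_simps)

lemma pp_comb:
  assumes "pg_point (comb x1 x2 x3 x4) = pg_point (comb y1 y2 y3 y4)"
  shows "\<exists>l. l \<noteq> 0 \<and> y1 = l * x1 \<and> y2 = l * x2 \<and> y3 = l * x3 \<and> y4 = l * x4"
proof -
  have "comb y1 y2 y3 y4 \<in> pg_point (comb x1 x2 x3 x4)" using assms pp_eq_iff by blast
  then obtain l where l: "l \<noteq> 0" "comb y1 y2 y3 y4 = smul l (comb x1 x2 x3 x4)" using pp_memE by blast
  hence "comb y1 y2 y3 y4 = comb (l*x1) (l*x2) (l*x3) (l*x4)" by (simp add: smul_comb)
  thus ?thesis using l(1) comb_inj by blast
qed

lemma c_a1: "comb 1 0 0 0 = a1" by (simp add: comb_def)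
lemma c_a2: "comb 0 1 0 0 = a2" by (simp add: comb_def)
lemma c_a3: "comb 0 0 1 0 = a3" by (simp add: comb_def)
lemma c_b: "comb 0 0 0 1 = b" by (simp add: comb_def)

lemma pp_a1: "pg_point (comb x1 x2 x3 x4) = pg_point a1 \<Longrightarrow> x2 = 0 \<and> x3 = 0 \<and> x4 = 0"
proof -
  assume e: "pg_point (comb x1 x2 x3 x4) = pg_point a1"
  have "pg_point (comb x1 x2 x3 x4) = pg_point (comb 1 0 0 0)" using e by (simp only: c_a1)
  then obtain l where "l \<noteq> 0" "0 = l * x2" "0 = l * x3" "0 = l * x4" using pp_comb by blast
  thus ?thesis by simp
qed
lemma pp_a2: "pg_point (comb x1 x2 x3 x4) = pg_point a2 \<Longrightarrow> x1 = 0 \<and> x3 = 0 \<and> x4 = 0"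
proof -
  assume e: "pg_point (comb x1 x2 x3 x4) = pg_point a2"
  have "pg_point (comb x1 x2 x3 x4) = pg_point (comb 0 1 0 0)" using e by (simp only: c_a2)
  then obtain l where "l \<noteq> 0" "0 = l * x1" "0 = l * x3" "0 = l * x4" using pp_comb by blast
  thus ?thesis by simp
qed
lemma pp_a3: "pg_point (comb x1 x2 x3 x4) = pg_point a3 \<Longrightarrow> x1 = 0 \<and> x2 = 0 \<and> x4 = 0"
proof -
  assume e: "pg_point (comb x1 x2 x3 x4) = pg_point a3"
  have "pg_point (comb x1 x2 x3 x4) = pg_point (comb 0 0 1 0)" using e by (simp only: c_a3)
  then obtain l where "l \<noteq> 0" "0 = l * x1" "0 = l * x2" "0 = l * x4" using pp_comb by blast
  thus ?thesis by simp
qed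
lemma pp_b: "pg_point (comb x1 x2 x3 x4) = pg_point b \<Longrightarrow> x1 = 0 \<and> x2 = 0 \<and> x3 = 0"
proof -
  assume e: "pg_point (comb x1 x2 x3 x4) = pg_point b"
  have "pg_point (comb x1 x2 x3 x4) = pg_point (comb 0 0 0 1)" using e by (simp only: c_b)
  then obtain l where "l \<noteq> 0" "0 = l * x1" "0 = l * x2" "0 = l * x3" using pp_comb by blast
  thus ?thesis by simp
qed

lemma distinct_pts: "pg_point a1 \<noteq> pg_point a2" "pg_point a1 \<noteq> pg_point a3" "pg_point a1 \<noteq> pg_point b"
      "pg_point a2 \<noteq> pg_point a3" "pg_point a2 \<noteq> pg_point b" "pg_point a3 \<noteq> pg_point b"
proof -
  show "pg_point a1 \<noteq> pg_point a2" using pp_a2[of 1 0 0 0] by (simp only: c_a1) (intro notI, simp)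
  show "pg_point a1 \<noteq> pg_point a3" using pp_a3[of 1 0 0 0] by (simp only: c_a1) (intro notI, simp)
  show "pg_point a1 \<noteq> pg_point b" using pp_b[of 1 0 0 0] by (simp only: c_a1) (intro notI, simp)
  show "pg_point a2 \<noteq> pg_point a3" using pp_a3[of 0 1 0 0] by (simp only: c_a2) (intro notI, simp)
  show "pg_point a2 \<noteq> pg_point b" using pp_b[of 0 1 0 0] by (simp only: c_a2) (intro notI, simp)
  show "pg_point a3 \<noteq> pg_point b" using pp_b[of 0 0 1 0] by (simp only: c_a3) (intro notI, simp)
qed

definition gp :: "nat \<Rightarrow> 'a \<Rightarrow> 'a \<Rightarrow> (nat \<Rightarrow> 'a) set" where
  "gp k t g = pg_point (comb (co1 k) (co2 k t) (co3 k t) g)"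

lemma counting:
  assumes fS: "finite S" and pts: "pg_point a1 \<in> S" "pg_point a2 \<in> S" "pg_point a3 \<in> S" "pg_point b \<in> S"
    and cS: "card S \<le> 2 * card (UNIV::'a set)"
    and bad: "\<And>k t. k < 3 \<Longrightarrow> t \<noteq> 0 \<Longrightarrow> \<exists>g. gp k t g \<in> S"
  shows False
proof -
  define Cand where "Cand = {..<(3::nat)} \<times> (UNIV - {0::'a})"
  define g where "g = (\<lambda>(k,t). gp k t (SOME g. gp k t g \<in> S))"
  have gS: "g x \<in> S" if "x \<in> Cand" for x
  proof -
    obtain k t where kt: "x = (k,t)" by fastforce
    have k: "k < 3" "t \<noteq> 0" using that kt by (auto simp: Cand_def)
    have "gp k t (SOME g. gp k t g \<in> S) \<in> S" by (rule someI_ex[OF bad[OF k]])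
    thus ?thesis by (simp add: g_def kt)
  qed
  have inj: "inj_on g Cand"
  proof (rule inj_onI)
    fix x y assume x: "x \<in> Cand" and y: "y \<in> Cand" and e: "g x = g y"
    obtain k t where kt: "x = (k,t)" by fastforce
    obtain k' t' where kt': "y = (k',t')" by fastforce
    from e obtain l where l: "l \<noteq> 0" "co1 k' = l * co1 k" "co2 k' t' = l * co2 k t" "co3 k' t' = l * co3 k t"
      unfolding g_def kt kt' gp_def by (auto dest!: pp_comb)
    show "x = y" using co_inj[OF _ _ _ _ l(2-4)] x y kt kt' by (auto simp: Cand_def)
  qed
  have notp: "g x \<notin> {pg_point a1, pg_point a2, pg_point a3, pg_point b}" if x: "x \<in> Cand" for x
  proof -
    obtain k t where kt: "x = (k,t)" by fastforce
    have k: "k < 3" "t \<noteq> 0" using x kt by (auto simp: Cand_def)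
    have h1: "g x \<noteq> pg_point a1" unfolding g_def kt gp_def using co_ne1[OF k] by (auto dest!: pp_a1)
    have h2: "g x \<noteq> pg_point a2" unfolding g_def kt gp_def using co_ne2[OF k] by (auto dest!: pp_a2)
    have h3: "g x \<noteq> pg_point a3" unfolding g_def kt gp_def using co_ne3[OF k] by (auto dest!: pp_a3)
    have h4: "g x \<noteq> pg_point b" unfolding g_def kt gp_def using co_ne3[OF k] by (auto dest!: pp_b)
    show ?thesis using h1 h2 h3 h4 by simp
  qed
  note d = distinct_pts
  have "g ` Cand \<subseteq> S - {pg_point a1, pg_point a2, pg_point a3, pg_point b}"
  proof (rule image_subsetI)
    fix x assume x: "x \<in> Cand"
    show "g x \<in> S - {pg_point a1, pg_point a2, pg_point a3, pg_point b}" using gS[OF x] notp[OF x] by (rule DiffI)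
  qed
  hence "card (g ` Cand) \<le> card (S - {pg_point a1, pg_point a2, pg_point a3, pg_point b})"
    using fS by (intro card_mono) simp_all
  moreover have "card (g ` Cand) = 3 * (card (UNIV::'a set) - 1)"
    using inj by (simp add: card_image Cand_def card_cartesian_product card_Diff_singleton)
  moreover have "card (S - {pg_point a1, pg_point a2, pg_point a3, pg_point b}) = card S - 4"
    using pts d fS by (simp add: card_Diff_subset)
  ultimately have "3 * (card (UNIV::'a set) - 1) \<le> card S - 4" by simp
  thus False using cS card_ge2[where 'a='a] by linarith
qed

end

context quad
begin

lemma no_min:
  fixes c :: "(nat \<Rightarrow> 'a) set \<Rightarrow> 'a" and n :: nat
  assumes c: "c \<in> pg_dual_code n" and n: "n \<ge> 2"
    and V: "a1 \<in> pg_vecs n" "a2 \<in> pg_vecs n" "a3 \<in> pg_vecs n" "b \<in> pg_vecs n"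
    and nz: "c (pg_point a1) \<noteq> 0" "c (pg_point a2) \<noteq> 0" "c (pg_point a3) \<noteq> 0" "c (pg_point b) \<noteq> 0"
    and cS: "card (pg_supp n c) \<le> 2 * card (UNIV::'a set)"
    and minw: "\<And>c' :: (nat \<Rightarrow> 'a) set \<Rightarrow> 'a. c' \<in> pg_dual_code n \<Longrightarrow> pg_supp n c' \<noteq> {} \<Longrightarrow> pg_weight n c \<le> pg_weight n c'"
  shows False
proof -
  let ?S = "pg_supp n c"
  have fS: "finite ?S" by (rule finite_subset[OF _ finite_points]) (auto simp: pg_supp_def)
  have inS: "pg_point v \<in> ?S" if "v \<in> pg_vecs n" "c (pg_point v) \<noteq> 0" for v
  proof -
    have "v \<noteq> (\<lambda>i. 0)" using that(2) dual_zero[OF c] by metis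
    thus ?thesis using that by (simp add: pg_supp_def pp_in_points)
  qed
  have combV: "comb x1 x2 x3 x4 \<in> pg_vecs n" for x1 x2 x3 x4
    using V by (simp add: comb_def pg_vecs_def)
  have gpS: "gp k t g \<in> ?S \<longleftrightarrow> c (pg_point (comb (co1 k) (co2 k t) (co3 k t) g)) \<noteq> 0" for k t g
    using inS[OF combV] unfolding gp_def pg_supp_def by auto
  have "\<exists>k t. k < 3 \<and> t \<noteq> 0 \<and> (\<forall>g. c (pg_point (comb (co1 k) (co2 k t) (co3 k t) g)) = 0)"
  proof (rule ccontr)
    assume "\<not> ?thesis"
    hence "\<exists>g. gp k t g \<in> ?S" if "k < 3" "t \<noteq> 0" for k t using that gpS by blast
    thus False using counting[OF fS inS[OF V(1) nz(1)] inS[OF V(2) nz(2)] inS[OF V(3) nz(3)] inS[OF V(4) nz(4)] cS]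
      by blast
  qed
  then obtain k t where k: "k < 3" "t \<noteq> 0" and good: "\<And>g. c (pg_point (comb (co1 k) (co2 k t) (co3 k t) g)) = 0"
    by blast
  define r where "r = comb (co1 k) (co2 k t) (co3 k t) 0"
  have rV: "r \<in> pg_vecs n" unfolding r_def by (rule combV)
  have r0: "r \<noteq> (\<lambda>i. 0)" using comb_zero co_ne3[OF k] unfolding r_def by blast
  have cr: "c (pg_point r) = 0" unfolding r_def by (rule good)
  obtain j where j: "r j \<noteq> 0" using r0 by auto
  have jn: "j \<le> n" using j rV by (auto simp: pg_vecs_def) (meson not_le)
  define w where "w = (\<lambda>i. if i = j then 1 / r j else (0::'a))"
  have wV: "w \<in> pg_vecs n" using jn by (auto simp: w_def pg_vecs_def)
  have "pg_dot n w r = (1 / r j) * r j" unfolding w_def by (rule dot_unit[OF jn])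
  hence wr: "pg_dot n w r = 1" using j by simp
  define x1 where "x1 = (if k = 2 then a2 else a1)"
  define x2 where "x2 = (if k = 0 then a2 else a3)"
  have req: "r = (\<lambda>i. x1 i + t * x2 i)"
    using k3[OF k(1)] unfolding r_def x1_def x2_def comb_def co1_def co2_def co3_def
    by (auto simp: fun_eq_iff)
  have D: "pg_dot n w x1 + t * pg_dot n w x2 = 1" using wr req dot_lin by metis
  have pe: "proj n w r x1 = smul (- t) (proj n w r x2)"
  proof
    fix i
    have ri: "r i = x1 i + t * x2 i" using req by simp
    have D1: "pg_dot n w x1 = 1 - t * pg_dot n w x2" using D by (simp add: algebra_simps)
    show "proj n w r x1 i = smul (- t) (proj n w r x2) i"
      unfolding proj_def smul_def by (simp add: D1 ri algebra_simps)
  qed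
  have Geq: "G n w r (pg_point x1) = G n w r (pg_point x2)"
    unfolding G_pp pe using pp_scale[of "-t" "proj n w r x2"] k(2) by simp
  have neq: "pg_point x1 \<noteq> pg_point x2"
    using k3[OF k(1)] distinct_pts unfolding x1_def x2_def by auto
  have x1S: "pg_point x1 \<in> ?S" unfolding x1_def using inS V nz by auto
  have x2S: "pg_point x2 \<in> ?S" unfolding x2_def using inS V nz by auto
  have lt: "pg_weight n (push n w r c) < pg_weight n c"
    by (rule push_weight[OF c rV x1S x2S neq Geq])
  have tang: "s = 0" if s: "c (pg_point (\<lambda>i. b i + s * r i)) \<noteq> 0" for s
  proof (rule ccontr)
    assume s0: "s \<noteq> 0"
    have "(\<lambda>i. b i + s * r i) = smul s (comb (co1 k) (co2 k t) (co3 k t) (1 / s))"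
      using s0 unfolding r_def comb_def by (simp add: fun_eq_iff algebra_simps)
    hence "pg_point (\<lambda>i. b i + s * r i) = pg_point (comb (co1 k) (co2 k t) (co3 k t) (1 / s))"
      using pp_scale[OF s0] by simp
    thus False using s good by simp
  qed
  have ne: "pg_supp n (push n w r c) \<noteq> {}"
    by (rule push_nonzero[OF c rV wr cr V(4) nz(4) tang])
  have n1: "n \<ge> 1" using n by simp
  have "push n w r c \<in> pg_dual_code n" by (rule push_dual[OF c n1 rV wV wr cr])
  hence "pg_weight n c \<le> pg_weight n (push n w r c)" by (rule minw[OF _ ne])
  thus False using lt by simp
qed

end

theorem mainTheorem16:
  fixes n :: nat and c :: "(nat \<Rightarrow> 'a::{finite,field}) set \<Rightarrow> 'a"
  assumes "n \<ge> 3"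
    and "min_weight_codeword (pg_dual_code n) n c"
  shows "\<exists>\<pi>\<in>pg_planes n. pg_supp n c \<subseteq> \<pi>"
proof -
  have c: "c \<in> pg_dual_code n" and ne: "pg_supp n c \<noteq> {}"
    using assms(2) unfolding min_weight_codeword_def by auto
  have minw: "\<And>c' :: (nat \<Rightarrow> 'a) set \<Rightarrow> 'a. c' \<in> pg_dual_code n \<Longrightarrow> pg_supp n c' \<noteq> {} \<Longrightarrow> pg_weight n c \<le> pg_weight n c'"
    using assms(2) unfolding min_weight_codeword_def by blast
  have n2: "n \<ge> 2" using assms(1) by simp
  have "pg_weight n c \<le> pg_weight n (c2 n :: (nat \<Rightarrow> 'a) set \<Rightarrow> 'a)"
    by (rule minw[OF c2_dual[OF n2] c2_supp_ne[OF n2]])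
  also have "\<dots> \<le> 2 * card (UNIV::'a set)" by (rule c2_weight[OF n2])
  finally have cS: "card (pg_supp n c) \<le> 2 * card (UNIV::'a set)" by (simp add: pg_weight_def)
  define VS where "VS = {v \<in> pg_vecs n. c (pg_point v) \<noteq> 0}"
  obtain B where B: "B \<subseteq> VS" "fv.independent B" "VS \<subseteq> fv.span B"
    using fv.maximal_independent_subset[of VS] by blast
  have BV: "B \<subseteq> pg_vecs n" using B(1) by (auto simp: VS_def)
  have fB: "finite B" using BV finite_vecs finite_subset by blast
  show ?thesis
  proof (cases "card B \<le> 3")
    case True
    obtain B' where B': "B \<subseteq> B'" "B' \<subseteq> pg_vecs n" "fv.independent B'" "card B' = 3"
      using EXT3[OF BV B(2) True n2] by blast
    then obtain u1 u2 u3 where u: "B' = {u1,u2,u3}" "u1 \<noteq> u2" "u2 \<noteq> u3" "u1 \<noteq> u3"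
      using card_3_iff by metis
    let ?pi = "{P \<in> pg_points n. \<exists>a b d. (\<lambda>i. a * u1 i + b * u2 i + d * u3 i) \<in> P}"
    have pi: "?pi \<in> pg_planes n" using plane_from[OF u(2-4)] B'(2,3) u(1) by simp
    have "pg_supp n c \<subseteq> ?pi"
    proof
      fix P assume P: "P \<in> pg_supp n c"
      hence Pp: "P \<in> pg_points n" and cP: "c P \<noteq> 0" by (auto simp: pg_supp_def)
      then obtain v where v: "v \<in> pg_vecs n" "v \<noteq> (\<lambda>i. 0)" "P = pg_point v" unfolding points_iff by blast
      have cv: "c (pg_point v) \<noteq> 0" using cP by (subst (asm) v(3))
      have "v \<in> VS" unfolding VS_def using v(1) cv by blast
      hence "v \<in> fv.span B'" using B(3) fv.span_mono[OF B'(1)] by blast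
      then obtain a bb dd where abd: "v = (\<lambda>i. a * u1 i + bb * u2 i + dd * u3 i)"
        using in_span3[OF u(2-4)] u(1) by blast
      have "v \<in> P" by (subst v(3)) (rule pp_mem)
      hence "(\<lambda>i. a * u1 i + bb * u2 i + dd * u3 i) \<in> P" by (simp only: abd)
      thus "P \<in> ?pi" using Pp by blast
    qed
    thus ?thesis using pi by blast
  next
    case False
    hence c4: "card B \<ge> 4" by simp
    obtain a1 a2 a3 b where ab: "a1 \<in> B" "a2 \<in> B" "a3 \<in> B" "b \<in> B"
        "a1 \<noteq> a2" "a1 \<noteq> a3" "a1 \<noteq> b" "a2 \<noteq> a3" "a2 \<noteq> b" "a3 \<noteq> b"
      using four_elems[OF fB c4] by blast
    have ind: "fv.independent {a1,a2,a3,b}" using fv.independent_mono[OF B(2)] ab(1-4) by auto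
    interpret quad a1 a2 a3 b
      by unfold_locales (rule indep4[OF ab(5-10) ind])
    have inV: "x \<in> pg_vecs n" and inz: "c (pg_point x) \<noteq> 0" if "x \<in> B" for x
      using that B(1) by (auto simp: VS_def)
    have False
      by (rule no_min[OF c n2 inV[OF ab(1)] inV[OF ab(2)] inV[OF ab(3)] inV[OF ab(4)]
            inz[OF ab(1)] inz[OF ab(2)] inz[OF ab(3)] inz[OF ab(4)] cS minw])
    thus ?thesis ..
  qed
qed

end
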